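(* Let $a,b,d\in\mathbb{C}$ with $a\neq b$. For every integer $n\ge 1$, $$\int_a^b S_n(u;a,b,d)\,du=2^n(b-a)^{n+1}B_n\!\left(\frac12+\frac{d}{b-a}\right),$$ where the integral is along any piecewise smooth path from $a$ to $b$ (the integrand being a polynomial) and $$S_n(u;a,b,d)=\sum_{k=0}^{n}\binom{n}{k}(2d)^k\,Q_{n-k}(u;a,b).$$ In particular (case $d=0$), $\int_a^b Q_n(u;a,b)\,du=2^nB_n(\tfrac12)(b-a)^{n+1}$.
   Context: The MacMahon numbers $M_{n,k}$ ($n\ge1$, $1\le k\le n$) are defined by $M_{n,1}=1$ for all $n\ge1$ and, for $n\ge 2$, $2\le k\le n$, $M_{n,k}=(2k-1)M_{n-1,k}+(2n-2k+1)M_{n-1,k-1}$, with the convention $M_{n-1,n}=0$. For $a,b\in\mathbb{C}$ the derivative polynomial is $Q_n(u;a,b)=\sum_{k=1}^{n+1}M_{n+1,k}(u-a)^{n+1-k}(u-b)^{k-1}$ ($n\ge 0$). The Bernoulli polynomials $B_n(w)$ are defined by $\sum_{n\ge0}B_n(w)\frac{t^n}{n!}=\frac{t e^{wt}}{e^t-1}$. *)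

theory Defs
  imports "HOL-Analysis.Analysis" "HOL-Computational_Algebra.Formal_Power_Series"
begin

text \<open>MacMahon numbers M(n,k) for n \<ge> 1, 1 \<le> k \<le> n; set to 0 outside that range
  (this realises the convention M(n-1,n) = 0).\<close>
fun macmahon :: "nat \<Rightarrow> nat \<Rightarrow> nat" where
  "macmahon 0 k = 0"
| "macmahon (Suc m) k =
     (if k = 1 then 1
      else if k < 1 \<or> k > Suc m then 0
      else (2*k - 1) * macmahon m k + (2 * Suc m - 2*k + 1) * macmahon m (k - 1))"

definition Qpoly :: "nat \<Rightarrow> complex \<Rightarrow> complex \<Rightarrow> complex \<Rightarrow> complex" where
  "Qpoly n u a b = (\<Sum>k=1..n+1. of_nat (macmahon (n+1) k) * (u - a) ^ (n + 1 - k) * (u - b) ^ (k - 1))"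

definition Spoly :: "nat \<Rightarrow> complex \<Rightarrow> complex \<Rightarrow> complex \<Rightarrow> complex \<Rightarrow> complex" where
  "Spoly n u a b d = (\<Sum>k=0..n. of_nat (n choose k) * (2*d) ^ k * Qpoly (n - k) u a b)"

definition bernpoly :: "nat \<Rightarrow> complex \<Rightarrow> complex" where
  "bernpoly n w = fact n * fps_nth (fps_X * fps_exp w / (fps_exp 1 - 1)) n"

definition has_contour_integral_path ::
  "(complex \<Rightarrow> complex) \<Rightarrow> complex \<Rightarrow> (real \<Rightarrow> complex) \<Rightarrow> bool" where
  "has_contour_integral_path f i g \<longleftrightarrow>
     ((\<lambda>x. f (g x) * vector_derivative g (at x within {0..1})) has_integral i) {0..1}"

end

theory Submission
  imports Defs
begin



lemma neg1_pow_fps: "(-1 :: complex fps) ^ i = fps_const ((-1) ^ i)"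
proof -
  have "(-1 :: complex fps) = fps_const (-1)" by (simp add: fps_const_neg)
  then show ?thesis by (simp only: fps_const_power)
qed

lemma zpow_expand:
  "(1 - fps_exp (1::complex)) ^ j =
     (\<Sum>i\<le>j. fps_const (of_nat (j choose i) * (-1)^i) * fps_exp (of_nat i))"
proof -
  have "(1 - fps_exp (1::complex)) ^ j = (- fps_exp 1 + 1) ^ j" by simp
  also have "\<dots> = (\<Sum>i\<le>j. of_nat (j choose i) * (- fps_exp 1) ^ i * 1 ^ (j - i))"
    by (rule binomial_ring)
  also have "\<dots> = (\<Sum>i\<le>j. fps_const (of_nat (j choose i) * (-1)^i) * fps_exp (of_nat i))"
  proof (rule sum.cong[OF refl])
    fix i assume "i \<in> {..j}"
    have "(- fps_exp (1::complex)) ^ i = (-1)^i * fps_exp 1 ^ i"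
      by (rule power_minus)
    also have "\<dots> = fps_const ((-1)^i) * fps_exp (of_nat i)"
      by (simp only: neg1_pow_fps fps_exp_power_mult mult_1_right)
    finally have "(- fps_exp (1::complex)) ^ i = fps_const ((-1)^i) * fps_exp (of_nat i)" .
    then show "of_nat (j choose i) * (- fps_exp (1::complex)) ^ i * 1 ^ (j - i) =
       fps_const (of_nat (j choose i) * (-1)^i) * fps_exp (of_nat i)"
      by (simp only: power_one mult_1_right fps_of_nat fps_const_mult[symmetric] mult.assoc)
  qed
  finally show ?thesis .
qed

lemma coeff_expz:
  "fps_nth (fps_exp w * (1 - fps_exp (1::complex)) ^ j) n =
     (\<Sum>i\<le>j. of_nat (j choose i) * (-1)^i * (w + of_nat i)^n) / fact n"
proof -
  have "fps_exp w * (1 - fps_exp (1::complex)) ^ j =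
     (\<Sum>i\<le>j. fps_const (of_nat (j choose i) * (-1)^i) * fps_exp (w + of_nat i))"
    unfolding zpow_expand sum_distrib_left
    by (rule sum.cong[OF refl]) (simp only: fps_exp_add_mult mult_ac)
  then show ?thesis
    by (simp add: fps_sum_nth sum_divide_distrib)
qed

lemma vanish:
  assumes "n < j"
  shows "(\<Sum>i\<le>j. of_nat (j choose i) * (-1)^i * (w + of_nat i)^n) = (0::complex)"
proof -
  have "fps_nth (fps_exp w * (1 - fps_exp (1::complex)) ^ j) n = 0"
  proof -
    have "fps_nth ((1 - fps_exp (1::complex)) ^ j) k = 0" if "k \<le> n" for k
      using startsby_zero_power_prefix[of "1 - fps_exp (1::complex)" j] that assms by simp
    then show ?thesis unfolding fps_mult_nth by (intro sum.neutral) simp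
  qed
  then show ?thesis by (simp add: coeff_expz)
qed
lemma S_deriv:
  fixes N :: nat
  defines "z \<equiv> 1 - fps_exp (1::complex)"
  shows "fps_deriv (\<Sum>j\<le>N. fps_const (1 / of_nat (Suc j)) * z ^ Suc j) = z ^ Suc N - 1"
proof -
  have dz: "fps_deriv z = z - 1" unfolding z_def by simp
  have "fps_deriv (\<Sum>j\<le>N. fps_const (1 / of_nat (Suc j)) * z ^ Suc j)
      = (\<Sum>j\<le>N. fps_const (1 / of_nat (Suc j)) * (fps_const (of_nat (Suc j)) * fps_deriv z * z ^ j))"
    unfolding fps_deriv_sum by (rule sum.cong[OF refl]) (simp only: fps_deriv_mult_const_left fps_deriv_power diff_Suc_1)
  also have "\<dots> = (\<Sum>j\<le>N. fps_deriv z * z ^ j)"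
  proof (rule sum.cong[OF refl])
    fix j
    have "fps_const (1 / of_nat (Suc j)) * fps_const (of_nat (Suc j)) = (1 :: complex fps)"
      by (simp del: of_nat_Suc flip: fps_const_mult)
    then show "fps_const (1 / of_nat (Suc j)) * (fps_const (of_nat (Suc j)) * fps_deriv z * z ^ j) = fps_deriv z * z ^ j"
      by (metis (no_types, lifting) mult.assoc mult_1)
  qed
  also have "\<dots> = (z - 1) * (\<Sum>j<Suc N. z ^ j)"
    by (simp add: dz sum_distrib_left lessThan_Suc_atMost)
  also have "\<dots> = z ^ Suc N - 1" by (rule power_diff_1_eq[symmetric])
  finally show ?thesis .
qed

lemma EL_coeffs:
  fixes N :: nat
  defines "z \<equiv> 1 - fps_exp (1::complex)"
  defines "L \<equiv> (\<Sum>j\<le>N. fps_const (1 / of_nat (Suc j)) * z ^ j)"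
  assumes "m \<le> Suc N"
  shows "fps_nth ((fps_exp 1 - 1) * L) m = fps_nth fps_X m"
proof -
  define S where "S = (\<Sum>j\<le>N. fps_const (1 / of_nat (Suc j)) * z ^ Suc j)"
  have z0: "fps_nth z 0 = 0" unfolding z_def by simp
  have "(fps_exp 1 - 1) * L = - S"
    unfolding S_def L_def z_def sum_distrib_left
    by (simp add: sum_negf[symmetric] algebra_simps)
  moreover have "fps_nth S 0 = 0"
    unfolding S_def fps_sum_nth by (intro sum.neutral) (simp add: z0 startsby_zero_power)
  moreover have "fps_nth S (Suc k) = (if k = 0 then -1 else 0)" if "k \<le> N" for k
  proof -
    have "fps_nth (fps_deriv S) k = fps_nth (z ^ Suc N - 1) k"
      unfolding S_def z_def using S_deriv[of N] by simp
    moreover have "fps_nth (z ^ Suc N) k = 0"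
      using startsby_zero_power_prefix[OF z0, of "Suc N"] that by simp
    ultimately have "of_nat (Suc k) * fps_nth S (Suc k) = (if k = 0 then -1 else 0)"
      by simp
    then show ?thesis
      by (cases "k = 0") (simp, simp del: of_nat_Suc)
  qed
  ultimately show ?thesis using assms(3)
    by (cases m) auto
qed

lemma bernpoly_explicit:
  assumes "n \<le> N"
  shows "fact n * fps_nth (fps_X * fps_exp w / (fps_exp 1 - 1)) n =
     (\<Sum>j\<le>N. (1 / of_nat (Suc j)) *
        (\<Sum>i\<le>j. of_nat (j choose i) * (-1)^i * (w + of_nat i)^n) :: complex)"
proof -
  define z where "z = 1 - fps_exp (1::complex)"
  define L where "L = (\<Sum>j\<le>N. fps_const (1 / of_nat (Suc j)) * z ^ j)"
  define B where "B = fps_X * fps_exp w / (fps_exp 1 - (1::complex fps))"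
  have g0: "fps_exp 1 - (1::complex fps) \<noteq> 0"
  proof
    assume "fps_exp 1 - (1::complex fps) = 0"
    then have "fps_nth (fps_exp 1 - (1::complex fps)) 1 = 0" by simp
    then show False by simp
  qed
  have sd: "subdegree (fps_exp 1 - (1::complex fps)) \<le> subdegree (fps_X * fps_exp w)"
  proof -
    have "subdegree (fps_exp 1 - (1::complex fps)) \<le> 1" by (rule subdegree_leI) simp
    moreover have "subdegree (fps_X * fps_exp w) \<ge> 1"
    proof (rule subdegree_geI)
      show "fps_X * fps_exp w \<noteq> 0"
      proof
        assume "fps_X * fps_exp w = 0"
        then have "fps_nth (fps_X * fps_exp w) 1 = 0" by simp
        then show False by simp
      qed
    qed simp
    ultimately show ?thesis by simp
  qed
  have BE: "B * (fps_exp 1 - 1) = fps_X * fps_exp w"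
    unfolding B_def using fps_times_divide_eq[OF g0 sd] .
  have "fps_nth (B * ((fps_exp 1 - 1) * L)) (Suc n) = fps_nth (B * fps_X) (Suc n)"
    unfolding fps_mult_nth[of B]
  proof (rule sum.cong[OF refl])
    fix i assume "i \<in> {0..Suc n}"
    then have "Suc n - i \<le> Suc N" using assms by auto
    then show "fps_nth B i * fps_nth ((fps_exp 1 - 1) * L) (Suc n - i) = fps_nth B i * fps_nth fps_X (Suc n - i)"
      using EL_coeffs[of "Suc n - i" N] unfolding z_def L_def by simp
  qed
  also have "\<dots> = fps_nth B n" by (simp add: mult.commute)
  finally have 1: "fps_nth B n = fps_nth (B * ((fps_exp 1 - 1) * L)) (Suc n)" ..
  have "B * ((fps_exp 1 - 1) * L) = fps_X * (fps_exp w * L)"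
    by (metis BE mult.assoc)
  then have 2: "fps_nth B n = fps_nth (fps_exp w * L) n" using 1 by (simp only: fps_X_mult_nth) simp
  have "fps_nth (fps_exp w * L) n = (\<Sum>j\<le>N. (1 / of_nat (Suc j)) * fps_nth (fps_exp w * z ^ j) n)"
    unfolding L_def sum_distrib_left fps_sum_nth
    by (rule sum.cong[OF refl]) (simp only: mult.left_commute[of "fps_exp w"] fps_mult_left_const_nth)
  also have "\<dots> = (\<Sum>j\<le>N. (1 / of_nat (Suc j)) *
        (\<Sum>i\<le>j. of_nat (j choose i) * (-1)^i * (w + of_nat i)^n)) / fact n"
    by (simp only: z_def coeff_expz sum_divide_distrib[of _ "{..N}"] times_divide_eq_right)
  finally show ?thesis using 2 unfolding B_def by simp
qed

lemma prim_lemma: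
  fixes f :: "complex \<Rightarrow> complex" and g :: "real \<Rightarrow> complex"
  assumes "a \<le> b"
      and "\<And>x. (f has_field_derivative f' x) (at x)"
      and "g piecewise_differentiable_on {a..b}"
    shows "((\<lambda>x. f'(g x) * vector_derivative g (at x within {a..b}))
             has_integral (f(g b) - f(g a))) {a..b}"
proof -
  obtain K where "finite K" and K: "\<forall>x\<in>{a..b} - K. g differentiable (at x within {a..b})" and cg: "continuous_on {a..b} g"
    using assms by (auto simp: piecewise_differentiable_on_def)
  have "continuous_on (g ` {a..b}) f"
    using assms by (metis DERIV_continuous_on continuous_on_subset image_subsetI has_field_derivative_at_within)
  then have cfg: "continuous_on {a..b} (\<lambda>x. f (g x))"
    by (rule continuous_on_compose [OF cg, unfolded o_def])
  { fix x::real
    assume a: "a < x" and b: "x < b" and xk: "x \<notin> K"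
    then have "g differentiable at x within {a..b}"
      using K by (simp add: differentiable_at_withinI)
    then have "(g has_vector_derivative vector_derivative g (at x within {a..b})) (at x within {a..b})"
      by (simp add: vector_derivative_works has_field_derivative_def scaleR_conv_of_real)
    then have gdiff: "(g has_derivative (\<lambda>u. u * vector_derivative g (at x within {a..b}))) (at x within {a..b})"
      by (simp add: has_vector_derivative_def scaleR_conv_of_real)
    have "(f has_field_derivative (f' (g x))) (at (g x) within g ` {a..b})"
      using assms by (metis has_field_derivative_at_within)
    then have fdiff: "(f has_derivative (*) (f' (g x))) (at (g x) within g ` {a..b})"
      by (simp add: has_field_derivative_def)
    have "((\<lambda>x. f (g x)) has_vector_derivative f' (g x) * vector_derivative g (at x within {a..b})) (at x within {a..b})"
      using diff_chain_within [OF gdiff fdiff]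
      by (simp add: has_vector_derivative_def scaleR_conv_of_real o_def mult_ac)
  } then show ?thesis
    using assms cfg 
    by (force simp: at_within_Icc_at intro: fundamental_theorem_of_calculus_interior_strong [OF \<open>finite K\<close>])
qed

lemma prim_contour:
  assumes "\<And>u. (F has_field_derivative f u) (at u)" "valid_path g"
  shows "has_contour_integral_path f (F (pathfinish g) - F (pathstart g)) g"
  unfolding has_contour_integral_path_def pathfinish_def pathstart_def
  using assms(2) unfolding valid_path_def
  by (intro prim_lemma[where f = F]) (auto intro: assms(1) piecewise_C1_imp_differentiable)



lemma mac_big: "m < k \<Longrightarrow> macmahon m k = 0"
  by (cases m) auto

lemma mac_0: "macmahon m 0 = 0"
  by (cases m) auto

lemma mac_rec:
  assumes "1 \<le> m" "1 \<le> k"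
  shows "macmahon (Suc m) k = (2*k-1)*macmahon m k + (2 * Suc m - 2*k + 1)*macmahon m (k-1)"
proof -
  obtain m' where m: "m = Suc m'" using assms by (cases m) auto
  show ?thesis
  proof (cases "k = 1")
    case True then show ?thesis using m by (simp add: mac_0)
  next
    case False
    show ?thesis
    proof (cases "k > Suc m")
      case True
      then show ?thesis using mac_big[of m k] mac_big[of m "k-1"] by simp
    qed (use False assms in simp)
  qed
qed

declare macmahon.simps[simp del]

lemma mac_rec_j:
  assumes "j \<le> Suc n"
  shows "(of_nat (macmahon (Suc (Suc n)) (Suc j)) :: complex) =
     (2 * of_nat j + 1) * of_nat (macmahon (Suc n) (Suc j))
     + (2 * of_nat n + 3 - 2 * of_nat j) * of_nat (macmahon (Suc n) j)"
proof -
  have "macmahon (Suc (Suc n)) (Suc j) = (2*Suc j-1)*macmahon (Suc n) (Suc j) + (2 * Suc (Suc n) - 2*Suc j + 1)*macmahon (Suc n) (Suc j - 1)"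
    by (rule mac_rec) simp_all
  also have "2 * Suc (Suc n) - 2*Suc j + 1 = 2*n+3-2*j" using assms by simp
  also have "2*Suc j-1 = 2*j+1" by simp
  finally have "macmahon (Suc (Suc n)) (Suc j) = (2*j+1)*macmahon (Suc n) (Suc j) + (2*n+3-2*j)*macmahon (Suc n) j"
    by simp
  then have "(of_nat (macmahon (Suc (Suc n)) (Suc j)) :: complex) = of_nat (2*j+1) * of_nat (macmahon (Suc n) (Suc j)) + of_nat (2*n+3-2*j) * of_nat (macmahon (Suc n) j)"
    by (simp only: of_nat_add[symmetric] of_nat_mult[symmetric])
  moreover have "(of_nat (2*n+3-2*j) :: complex) = 2 * of_nat n + 3 - 2 * of_nat j"
    using assms by (simp add: of_nat_diff)
  moreover have "(of_nat (2*j+1) :: complex) = 2 * of_nat j + 1" by simp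
  ultimately show ?thesis by simp
qed

definition qq :: "nat \<Rightarrow> complex \<Rightarrow> complex" where
  "qq n t = (\<Sum>j\<le>n. of_nat (macmahon (Suc n) (Suc j)) * t^(n-j) * (t-1)^j)"

lemma Qpoly_shift:
  "Qpoly n u a b = (\<Sum>j\<le>n. of_nat (macmahon (Suc n) (Suc j)) * (u-a)^(n-j) * (u-b)^j)"
  unfolding Qpoly_def
  by (simp only: Suc_eq_plus1[symmetric] One_nat_def add_Suc_right add_0_right sum.shift_bounds_cl_Suc_ivl atMost_atLeast0 diff_Suc_Suc diff_Suc_1 diff_zero)

lemma qq_rec:
  "qq (Suc n) t = (\<Sum>j\<le>n. of_nat (macmahon (Suc n) (Suc j)) * t^(n-j) * (t-1)^j *
        ((2 * of_nat j + 1) * t + (2 * of_nat n + 1 - 2 * of_nat j) * (t - 1)))"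
proof -
  let ?M = "\<lambda>j. (of_nat (macmahon (Suc n) j) :: complex)"
  have "qq (Suc n) t = (\<Sum>j\<le>Suc n. ((2 * of_nat j + 1) * ?M (Suc j)
     + (2 * of_nat n + 3 - 2 * of_nat j) * ?M j) * t^(Suc n-j) * (t-1)^j)"
    unfolding qq_def by (rule sum.cong[OF refl]) (simp add: mac_rec_j)
  also have "\<dots> = (\<Sum>j\<le>Suc n. (2 * of_nat j + 1) * ?M (Suc j) * t^(Suc n-j) * (t-1)^j)
     + (\<Sum>j\<le>Suc n. (2 * of_nat n + 3 - 2 * of_nat j) * ?M j * t^(Suc n-j) * (t-1)^j)"
    by (simp only: sum.distrib[symmetric] distrib_right)
  also have "(\<Sum>j\<le>Suc n. (2 * of_nat j + 1) * ?M (Suc j) * t^(Suc n-j) * (t-1)^j)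
     = (\<Sum>j\<le>n. (2 * of_nat j + 1) * ?M (Suc j) * t^(Suc n-j) * (t-1)^j)"
    by (simp add: mac_big)
  also have "\<dots> = (\<Sum>j\<le>n. (2 * of_nat j + 1) * ?M (Suc j) * t^(n-j) * (t-1)^j * t)"
    by (rule sum.cong[OF refl]) (simp add: Suc_diff_le)
  also have "(\<Sum>j\<le>Suc n. (2 * of_nat n + 3 - 2 * of_nat j) * ?M j * t^(Suc n-j) * (t-1)^j)
     = (\<Sum>j\<le>n. (2 * of_nat n + 1 - 2 * of_nat j) * ?M (Suc j) * t^(n-j) * (t-1)^j * (t-1))"
    unfolding sum.atMost_Suc_shift
    by (simp add: mac_0, rule sum.cong[OF refl], simp add: algebra_simps)
  also have "(\<Sum>j\<le>n. (2 * of_nat j + 1) * ?M (Suc j) * t^(n-j) * (t-1)^j * t)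
     + (\<Sum>j\<le>n. (2 * of_nat n + 1 - 2 * of_nat j) * ?M (Suc j) * t^(n-j) * (t-1)^j * (t-1))
     = (\<Sum>j\<le>n. ?M (Suc j) * t^(n-j) * (t-1)^j *
        ((2 * of_nat j + 1) * t + (2 * of_nat n + 1 - 2 * of_nat j) * (t - 1)))"
    unfolding sum.distrib[symmetric] by (rule sum.cong[OF refl]) (simp add: algebra_simps)
  finally show ?thesis .
qed



definition qqd :: "nat \<Rightarrow> complex \<Rightarrow> complex" where
  "qqd n t = (\<Sum>j\<le>n. of_nat (macmahon (Suc n) (Suc j)) *
     (of_nat (n-j) * t^(n-j-1) * (t-1)^j + t^(n-j) * (of_nat j * (t-1)^(j-1))))"

lemma d_term: "((\<lambda>t. c * t^p * (t-1)^r) has_field_derivative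
   c * (of_nat p * t^(p-1) * (t-1)^r + t^p * (of_nat r * (t-1)^(r-1)))) (at (t::complex))"
  by (auto intro!: derivative_eq_intros simp: algebra_simps)

lemma qq_deriv: "(qq n has_field_derivative qqd n t) (at t)"
  unfolding qq_def[abs_def] qqd_def
  by (intro DERIV_sum d_term)

lemma powd: "(x::complex) * (of_nat p * x^(p-1)) = of_nat p * x^p"
  by (cases p) simp_all

lemma qq_rec_d: "qq (Suc n) t = (2*t-1) * qq n t + 2*t*(t-1) * qqd n t"
proof -
  have "qq (Suc n) t = (\<Sum>j\<le>n. of_nat (macmahon (Suc n) (Suc j)) *
     ((2*t-1) * (t^(n-j) * (t-1)^j) + 2*t*(t-1) *
     (of_nat (n-j) * t^(n-j-1) * (t-1)^j + t^(n-j) * (of_nat j * (t-1)^(j-1)))))"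
    unfolding qq_rec
  proof (rule sum.cong[OF refl])
    fix j assume "j \<in> {..n}"
    then have jn: "j \<le> n" by simp
    have e: "2*t*(t-1) * (of_nat (n-j) * t^(n-j-1) * (t-1)^j + t^(n-j) * (of_nat j * (t-1)^(j-1)))
      = 2*(t-1)*(t*(of_nat (n-j) * t^(n-j-1)))*(t-1)^j + 2*t*t^(n-j)*((t-1)*(of_nat j * (t-1)^(j-1)))"
      by (simp add: algebra_simps)
    have c: "(of_nat (n-j) :: complex) = of_nat n - of_nat j" using jn by (simp add: of_nat_diff)
    show "of_nat (macmahon (Suc n) (Suc j)) * t^(n-j) * (t-1)^j *
        ((2 * of_nat j + 1) * t + (2 * of_nat n + 1 - 2 * of_nat j) * (t - 1)) =
      of_nat (macmahon (Suc n) (Suc j)) *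
     ((2*t-1) * (t^(n-j) * (t-1)^j) + 2*t*(t-1) *
     (of_nat (n-j) * t^(n-j-1) * (t-1)^j + t^(n-j) * (of_nat j * (t-1)^(j-1))))"
      unfolding e powd unfolding c by (simp add: algebra_simps)
  qed
  also have "\<dots> = (2*t-1) * qq n t + 2*t*(t-1) * qqd n t"
    unfolding qq_def qqd_def sum_distrib_left sum.distrib[symmetric]
    by (rule sum.cong[OF refl]) (simp add: algebra_simps)
  finally show ?thesis .
qed

definition AA :: "nat \<Rightarrow> nat \<Rightarrow> complex" where
  "AA n j = (\<Sum>i\<le>j. of_nat (j choose i) * (-1)^i * (2 * of_nat i + 1)^n)"

lemma AA_vanish: "n < j \<Longrightarrow> AA n j = 0"
proof -
  assume a: "n < j"
  have "AA n j = 2^n * (\<Sum>i\<le>j. of_nat (j choose i) * (-1)^i * (1/2 + of_nat i)^n)"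
    unfolding AA_def sum_distrib_left
  proof (rule sum.cong[OF refl])
    fix i
    have "(2 * of_nat i + 1 :: complex) = 2 * (1/2 + of_nat i)" by simp
    then have "(2 * of_nat i + 1 :: complex)^n = 2^n * (1/2 + of_nat i)^n"
      by (simp only: power_mult_distrib)
    then show "of_nat (j choose i) * (-1)^i * (2 * of_nat i + 1 :: complex)^n =
      2^n * (of_nat (j choose i) * (-1)^i * (1/2 + of_nat i)^n)"
      by simp
  qed
  then show ?thesis using vanish[OF a] by simp
qed

lemma AA_rec: "AA (Suc n) j = (2 * of_nat j + 1) * AA n j - 2 * of_nat j * AA n (j - 1)"
proof -
  have "AA (Suc n) j = (\<Sum>i\<le>j. of_nat (j choose i) * (-1)^i * ((2 * of_nat j + 1) - 2 * of_nat (j - i)) * (2 * of_nat i + 1)^n)"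
    unfolding AA_def
    by (rule sum.cong[OF refl]) (simp add: of_nat_diff algebra_simps)
  also have "\<dots> = (2 * of_nat j + 1) * AA n j - 2 * (\<Sum>i\<le>j. of_nat ((j - i) * (j choose i)) * (-1)^i * (2 * of_nat i + 1)^n)"
    unfolding AA_def sum_distrib_left sum_subtractf[symmetric]
    by (rule sum.cong[OF refl]) (simp add: algebra_simps)
  also have "(\<Sum>i\<le>j. of_nat ((j - i) * (j choose i)) * (-1)^i * (2 * of_nat i + 1 :: complex)^n)
     = of_nat j * AA n (j - 1)"
  proof (cases j)
    case 0 then show ?thesis by simp
  next
    case (Suc m)
    have "(\<Sum>i\<le>j. of_nat ((j - i) * (j choose i)) * (-1)^i * (2 * of_nat i + 1 :: complex)^n)
       = (\<Sum>i\<le>Suc m. of_nat j * (of_nat (m choose i) * (-1)^i * (2 * of_nat i + 1 :: complex)^n))"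
      unfolding binomial_absorb_comp Suc by (rule sum.cong[OF refl]) (simp add: algebra_simps)
    also have "\<dots> = of_nat j * AA n m"
      by (simp add: AA_def sum_distrib_left)
    finally show ?thesis using Suc by simp
  qed
  finally show ?thesis by simp
qed

definition pp :: "nat \<Rightarrow> complex \<Rightarrow> complex" where
  "pp n t = (\<Sum>j\<le>n. AA n j * (1-t)^j)"

definition ppd :: "nat \<Rightarrow> complex \<Rightarrow> complex" where
  "ppd n t = (\<Sum>j\<le>n. AA n j * (- (of_nat j * (1-t)^(j-1))))"

lemma d_term2: "((\<lambda>t. c * (1-t)^r) has_field_derivative
   c * (- (of_nat r * (1-t)^(r-1)))) (at (t::complex))"
  by (auto intro!: derivative_eq_intros simp: algebra_simps)

lemma pp_deriv: "(pp n has_field_derivative ppd n t) (at t)"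
  unfolding pp_def[abs_def] ppd_def
  by (intro DERIV_sum d_term2)

lemma pp_rec_d: "pp (Suc n) t = (2*t-1) * pp n t + 2*t*(t-1) * ppd n t"
proof -
  have "pp (Suc n) t = (\<Sum>j\<le>Suc n. (2 * of_nat j + 1) * AA n j * (1-t)^j)
      - (\<Sum>j\<le>Suc n. 2 * of_nat j * AA n (j - 1) * (1-t)^j)"
    unfolding pp_def AA_rec sum_subtractf[symmetric] by (simp add: algebra_simps)
  also have "(\<Sum>j\<le>Suc n. (2 * of_nat j + 1) * AA n j * (1-t)^j) = (\<Sum>j\<le>n. (2 * of_nat j + 1) * AA n j * (1-t)^j)"
    by (simp add: AA_vanish)
  also have "(\<Sum>j\<le>Suc n. 2 * of_nat j * AA n (j - 1) * (1-t)^j) = (\<Sum>j\<le>n. 2 * of_nat (Suc j) * AA n j * (1-t)^(Suc j))"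
    unfolding sum.atMost_Suc_shift by simp
  also have "(\<Sum>j\<le>n. (2 * of_nat j + 1) * AA n j * (1-t)^j) - (\<Sum>j\<le>n. 2 * of_nat (Suc j) * AA n j * (1-t)^(Suc j))
     = (2*t-1) * pp n t + 2*t*(t-1) * ppd n t"
    unfolding pp_def ppd_def sum_distrib_left sum_subtractf[symmetric] sum.distrib[symmetric]
  proof (rule sum.cong[OF refl])
    fix j
    have e: "2*t*(t-1)*(AA n j * (-(of_nat j*(1-t)^(j-1)))) = 2*t*AA n j*((1-t)*(of_nat j*(1-t)^(j-1)))"
      by (simp add: algebra_simps)
    show "(2 * of_nat j + 1) * AA n j * (1-t)^j - 2 * of_nat (Suc j) * AA n j * (1-t)^(Suc j)
      = (2*t-1) * (AA n j * (1-t)^j) + 2*t*(t-1)*(AA n j * (-(of_nat j*(1-t)^(j-1))))"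
      unfolding e powd by (simp add: algebra_simps)
  qed
  finally show ?thesis .
qed

lemma qq_pp: "qq n = pp n"
proof (induction n)
  case 0
  show ?case by (rule ext) (simp add: qq_def pp_def AA_def macmahon.simps)
next
  case (Suc n)
  show ?case
  proof (rule ext)
    fix t
    have "qqd n t = ppd n t"
      using qq_deriv[of n t] pp_deriv[of n t] Suc.IH DERIV_unique by metis
    then show "qq (Suc n) t = pp (Suc n) t"
      unfolding qq_rec_d pp_rec_d Suc.IH by simp
  qed
qed



lemma Qpoly_scale:
  assumes "a \<noteq> b"
  shows "Qpoly n u a b = (b-a)^n * pp n ((u-a)/(b-a))"
proof -
  define t where "t = (u-a)/(b-a)"
  have ua: "u - a = (b-a)*t" unfolding t_def using assms by simp
  have ub: "u - b = (b-a)*(t-1)" unfolding t_def using assms by (simp add: field_simps)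
  have "Qpoly n u a b = (b-a)^n * qq n t"
    unfolding Qpoly_shift qq_def sum_distrib_left ua ub
  proof (rule sum.cong[OF refl])
    fix j assume "j \<in> {..n}"
    then have e1: "(b-a)^(n-j) * (b-a)^j = (b-a)^n" by (simp add: power_add[symmetric])
    have e2: "((b-a)*t)^(n-j) * ((b-a)*(t-1))^j = ((b-a)^(n-j)*(b-a)^j) * (t^(n-j)*(t-1)^j)"
      by (simp only: power_mult_distrib mult_ac)
    show "of_nat (macmahon (Suc n) (Suc j)) * ((b - a) * t) ^ (n - j) * ((b - a) * (t - 1)) ^ j =
         (b - a) ^ n * (of_nat (macmahon (Suc n) (Suc j)) * t ^ (n - j) * (t - 1) ^ j)"
      using e2 unfolding e1 by (simp only: mult_ac)
  qed
  then show ?thesis unfolding t_def qq_pp .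
qed

definition FF :: "nat \<Rightarrow> complex \<Rightarrow> complex \<Rightarrow> complex \<Rightarrow> complex" where
  "FF n a b u = (-1) * (b-a)^(Suc n) * (\<Sum>j\<le>n. AA n j / of_nat (Suc j) * ((b-u)/(b-a))^(Suc j))"

lemma d_term3:
  fixes a b c u :: complex
  assumes "a \<noteq> b"
  shows "((\<lambda>u. c / of_nat (Suc j) * ((b-u)/(b-a))^(Suc j)) has_field_derivative
     c * ((b-u)/(b-a))^j * (-1/(b-a))) (at u)"
proof -
  have dv: "((\<lambda>u. (b-u)/(b-a)) has_field_derivative -1/(b-a)) (at u)"
    using DERIV_cdivide[OF DERIV_diff[OF DERIV_const[of b] DERIV_ident], of "b-a"] by simp
  from DERIV_cmult[OF DERIV_power[OF dv, of "Suc j"], of "c / of_nat (Suc j)"] show ?thesis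
    by (simp del: of_nat_Suc)
qed

lemma FF_deriv:
  assumes "a \<noteq> b"
  shows "(FF n a b has_field_derivative Qpoly n u a b) (at u)"
proof -
  have "((\<lambda>u. \<Sum>j\<le>n. AA n j / of_nat (Suc j) * ((b-u)/(b-a))^(Suc j)) has_field_derivative
     (\<Sum>j\<le>n. AA n j * ((b-u)/(b-a))^j * (-1/(b-a)))) (at u)"
    by (intro DERIV_sum d_term3 assms)
  then have "(FF n a b has_field_derivative
     (-1) * (b-a)^(Suc n) * (\<Sum>j\<le>n. AA n j * ((b-u)/(b-a))^j * (-1/(b-a)))) (at u)"
    unfolding FF_def[abs_def] by (rule DERIV_cmult)
  moreover have "(-1) * (b-a)^(Suc n) * (\<Sum>j\<le>n. AA n j * ((b-u)/(b-a))^j * (-1/(b-a))) = Qpoly n u a b"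
  proof -
    have "1 - (u-a)/(b-a) = (b-u)/(b-a)" using assms by (simp add: field_simps)
    then have "Qpoly n u a b = (b-a)^n * (\<Sum>j\<le>n. AA n j * ((b-u)/(b-a))^j)"
      unfolding Qpoly_scale[OF assms] pp_def by simp
    moreover have "(-1) * (b-a)^(Suc n) * (\<Sum>j\<le>n. AA n j * ((b-u)/(b-a))^j * (-1/(b-a)))
        = (b-a)^n * (\<Sum>j\<le>n. AA n j * ((b-u)/(b-a))^j)"
      unfolding sum_distrib_left
      by (rule sum.cong[OF refl]) (use assms in \<open>simp add: field_simps\<close>)
    ultimately show ?thesis by simp
  qed
  ultimately show ?thesis by simp
qed

lemma AA_scaled: "AA n j = 2^n * (\<Sum>i\<le>j. of_nat (j choose i) * (-1)^i * (1/2 + of_nat i)^n)"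
  unfolding AA_def sum_distrib_left
proof (rule sum.cong[OF refl])
  fix i
  have "(2 * of_nat i + 1 :: complex) = 2 * (1/2 + of_nat i)" by simp
  then have "(2 * of_nat i + 1 :: complex)^n = 2^n * (1/2 + of_nat i)^n"
    by (simp only: power_mult_distrib)
  then show "of_nat (j choose i) * (-1)^i * (2 * of_nat i + 1 :: complex)^n =
    2^n * (of_nat (j choose i) * (-1)^i * (1/2 + of_nat i)^n)"
    by simp
qed

lemma bern_half: "2^n * bernpoly n (1/2) = (\<Sum>j\<le>n. AA n j / of_nat (Suc j))"
  unfolding bernpoly_def bernpoly_explicit[OF order_refl] sum_distrib_left AA_scaled
  by (rule sum.cong[OF refl]) (simp add: sum_divide_distrib)

lemma FF_val:
  assumes "a \<noteq> b"
  shows "FF n a b b - FF n a b a = 2^n * bernpoly n (1/2) * (b-a)^(n+1)"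
  unfolding FF_def bern_half using assms by (simp add: sum_distrib_left algebra_simps)



lemma bern_expl: "m \<le> N \<Longrightarrow> bernpoly m w = (\<Sum>j\<le>N. (1 / of_nat (Suc j)) *
        (\<Sum>i\<le>j. of_nat (j choose i) * (-1)^i * (w + of_nat i)^m))"
  unfolding bernpoly_def by (rule bernpoly_explicit)

lemma bern_add: "bernpoly n (x + y) = (\<Sum>k\<le>n. of_nat (n choose k) * y^k * bernpoly (n-k) x)"
proof -
  define F where "F k j i = (1 / of_nat (Suc j) * (of_nat (j choose i) * (-1)^i)) *
      (of_nat (n choose k) * y^k * (x + of_nat i)^(n-k) :: complex)" for k j i
  have "bernpoly n (x + y) = (\<Sum>j\<le>n. \<Sum>i\<le>j. \<Sum>k\<le>n. F k j i)"
    unfolding bern_expl[OF order_refl]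
  proof (intro sum.cong refl)
    fix j
    show "1 / of_nat (Suc j) * (\<Sum>i\<le>j. of_nat (j choose i) * (-1)^i * (x + y + of_nat i)^n) =
       (\<Sum>i\<le>j. \<Sum>k\<le>n. F k j i)"
      unfolding sum_distrib_left
    proof (intro sum.cong refl)
      fix i
      have "(x + y + of_nat i)^n = (\<Sum>k\<le>n. of_nat (n choose k) * y^k * (x + of_nat i)^(n-k))"
        using binomial_ring[of y "x + of_nat i" n] by (simp add: add_ac)
      then show "1 / of_nat (Suc j) * (of_nat (j choose i) * (-1)^i * (x + y + of_nat i)^n) =
         (\<Sum>k\<le>n. F k j i)"
      proof -
        have "1 / of_nat (Suc j) * (of_nat (j choose i) * (-1)^i * (x + y + of_nat i)^n) =
          (1 / of_nat (Suc j) * (of_nat (j choose i) * (-1)^i)) * (x + y + of_nat i)^n"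
          by (simp only: mult.assoc)
        also have "\<dots> = (\<Sum>k\<le>n. F k j i)"
          unfolding \<open>(x + y + of_nat i)^n = _\<close> sum_distrib_left F_def ..
        finally show ?thesis .
      qed
    qed
  qed
  also have "\<dots> = (\<Sum>j\<le>n. \<Sum>k\<le>n. \<Sum>i\<le>j. F k j i)"
    by (rule sum.cong[OF refl]) (rule sum.swap)
  also have "\<dots> = (\<Sum>k\<le>n. \<Sum>j\<le>n. \<Sum>i\<le>j. F k j i)"
    by (rule sum.swap)
  also have "\<dots> = (\<Sum>k\<le>n. of_nat (n choose k) * y^k * bernpoly (n-k) x)"
  proof (rule sum.cong[OF refl])
    fix k
    show "(\<Sum>j\<le>n. \<Sum>i\<le>j. F k j i) = of_nat (n choose k) * y^k * bernpoly (n-k) x"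
      unfolding bern_expl[of "n-k" n, OF diff_le_self] sum_distrib_left F_def
      by (intro sum.cong refl) (simp add: mult_ac)
  qed
  finally show ?thesis .
qed

lemma prim_contour':
  assumes "\<And>u. (F has_field_derivative f u) (at u)" "valid_path g"
    "pathstart g = a" "pathfinish g = b"
  shows "has_contour_integral_path f (F b - F a) g"
  using prim_contour[OF assms(1,2)] assms(3,4) by simp

theorem theorem5:
  fixes a b d :: complex and n :: nat and \<gamma> :: "real \<Rightarrow> complex"
  assumes "a \<noteq> b" and "n \<ge> 1"
    and "valid_path \<gamma>" and "pathstart \<gamma> = a" and "pathfinish \<gamma> = b"
  shows "has_contour_integral_path (\<lambda>u. Spoly n u a b d)
           (2 ^ n * (b - a) ^ (n + 1) * bernpoly n (1/2 + d / (b - a))) \<gamma>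
       \<and> has_contour_integral_path (\<lambda>u. Qpoly n u a b)
           (2 ^ n * bernpoly n (1/2) * (b - a) ^ (n + 1)) \<gamma>"
proof
  show "has_contour_integral_path (\<lambda>u. Qpoly n u a b)
           (2 ^ n * bernpoly n (1/2) * (b - a) ^ (n + 1)) \<gamma>"
    using prim_contour'[OF FF_deriv[OF assms(1)] assms(3,4,5)] FF_val[OF assms(1)] by simp
next
  define G where "G u = (\<Sum>k=0..n. of_nat (n choose k) * (2*d)^k * FF (n-k) a b u)" for u
  have "(G has_field_derivative Spoly n u a b d) (at u)" for u
    unfolding G_def[abs_def] Spoly_def
    by (intro DERIV_sum DERIV_cmult FF_deriv assms(1))
  from prim_contour'[OF this assms(3,4,5)]
  have "has_contour_integral_path (\<lambda>u. Spoly n u a b d) (G b - G a) \<gamma>" .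
  moreover have "G b - G a = 2 ^ n * (b - a) ^ (n + 1) * bernpoly n (1/2 + d / (b - a))"
  proof -
    have "G b - G a = (\<Sum>k=0..n. of_nat (n choose k) * (2*d)^k * (FF (n-k) a b b - FF (n-k) a b a))"
      unfolding G_def sum_subtractf[symmetric] by (simp add: algebra_simps)
    also have "\<dots> = (\<Sum>k=0..n. 2 ^ n * (b - a) ^ (n + 1) * (of_nat (n choose k) * (d / (b-a))^k * bernpoly (n-k) (1/2)))"
    proof (rule sum.cong[OF refl])
      fix k assume "k \<in> {0..n}"
      then have kn: "k \<le> n" by simp
      have p2: "(2::complex)^n = 2^k * 2^(n-k)" using kn by (simp add: power_add[symmetric])
      have pb: "(b-a)^(n+1) = (b-a)^k * (b-a)^(n-k+1)" using kn by (simp add: power_add[symmetric])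
      have dd: "(d/(b-a))^k * (b-a)^k = d^k" using assms(1) by (simp add: power_divide)
      show "of_nat (n choose k) * (2*d)^k * (FF (n-k) a b b - FF (n-k) a b a) =
        2 ^ n * (b - a) ^ (n + 1) * (of_nat (n choose k) * (d / (b-a))^k * bernpoly (n-k) (1/2))"
        unfolding FF_val[OF assms(1)] p2 pb power_mult_distrib
        by (simp add: dd[symmetric] mult_ac)
    qed
    also have "\<dots> = 2 ^ n * (b - a) ^ (n + 1) * bernpoly n (1/2 + d / (b - a))"
      unfolding bern_add sum_distrib_left atMost_atLeast0 by (simp add: mult_ac)
    finally show ?thesis .
  qed
  ultimately show "has_contour_integral_path (\<lambda>u. Spoly n u a b d)
           (2 ^ n * (b - a) ^ (n + 1) * bernpoly n (1/2 + d / (b - a))) \<gamma>" by simp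
qed


end
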